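(* Let $S$ be a numerical semigroup, let $u\in\mathrm U(\mathrm{Betti}(S))$ and let $\Lambda=\{b\in\mathrm{Betti}(S): b\le_S u\}$. Let $s\in S\setminus\Lambda$ be such that $u\le_S b$ for every $b\in\mathrm{Betti}(S)\setminus\Lambda$ with $b\le_S s$. Then the subgraph of $\nabla_s$ induced on the vertex set $\mathrm B(s;\Lambda)$ is connected.
   Context: A numerical semigroup $S$ is a submonoid of $(\mathbb N,+)$ with finite complement, minimally generated by $\{n_1,\dots,n_e\}$. Write $a\le_S b$ if $b-a\in S$. Let $\varphi:\mathbb N^e\to S$, $\varphi(a)=\sum_ia_in_i$; $\mathrm Z(s)=\varphi^{-1}(s)$. $\nabla_s$ is the graph on $\mathrm Z(s)$ with distinct $x,y$ adjacent iff $x\cdot y\ne0$; $s$ is a Betti element if $\nabla_s$ is disconnected; $\mathrm{Betti}(S)$ is the set of Betti elements. For a poset $(X,\le)$, $\mathrm U(X)=\{x\in X: \{y\in X:y\le x\}\text{ is totally ordered}\}$; here $X=(\mathrm{Betti}(S),\le_S)$. A factorization $z\in\mathrm Z(s)$ is isolated if $z\cdot x=0$ for all $x\in\mathrm Z(s)\setminus\{z\}$; $\mathrm I(t)$ is the set of isolated factorizations of $t$ and $\mathrm I(\Lambda)=\bigcup_{t\in\Lambda}\mathrm I(t)$. $\mathrm I_s(S)$ is the set of $z\in\mathbb N^e$ such that $\varphi(z)$ has exactly one factorization. For $\Lambda\subseteq S$, $\mathrm B(s;\Lambda)=\{w+x_1+\cdots+x_l\in\mathrm Z(s): w\in\mathrm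 I_s(S),\ l\ge0,\ x_1,\dots,x_l\in\mathrm I(\Lambda)\}$. *)

theory Defs
  imports Main
begin

definition numerical_semigroup :: "nat set \<Rightarrow> bool" where
  "numerical_semigroup S \<longleftrightarrow> 0 \<in> S \<and> (\<forall>a\<in>S. \<forall>b\<in>S. a + b \<in> S) \<and> finite (UNIV - S)"

definition minimal_generators :: "nat set \<Rightarrow> nat list \<Rightarrow> bool" where
  "minimal_generators S ns \<longleftrightarrow> distinct ns \<and>
     set ns = {x \<in> S. x \<noteq> 0 \<and> \<not> (\<exists>a\<in>S. \<exists>b\<in>S. a \<noteq> 0 \<and> b \<noteq> 0 \<and> x = a + b)}"

definition leS :: "nat set \<Rightarrow> nat \<Rightarrow> nat \<Rightarrow> bool" where
  "leS S a b \<longleftrightarrow> a \<le> b \<and> b - a \<in> S"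

(* N^e, represented as functions nat => nat supported on {..<e}, e = length ns *)
definition vecs :: "nat list \<Rightarrow> (nat \<Rightarrow> nat) set" where
  "vecs ns = {z. \<forall>i\<ge>length ns. z i = 0}"

definition phi :: "nat list \<Rightarrow> (nat \<Rightarrow> nat) \<Rightarrow> nat" where
  "phi ns z = (\<Sum>i<length ns. z i * ns ! i)"

definition dot :: "nat list \<Rightarrow> (nat \<Rightarrow> nat) \<Rightarrow> (nat \<Rightarrow> nat) \<Rightarrow> nat" where
  "dot ns x y = (\<Sum>i<length ns. x i * y i)"

definition Z :: "nat list \<Rightarrow> nat \<Rightarrow> (nat \<Rightarrow> nat) set" where
  "Z ns s = {z \<in> vecs ns. phi ns z = s}"

(* the subgraph of nabla_s induced on V (V a subset of Z(s)) is connected: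
   any two vertices of V are joined by a path inside V whose consecutive
   vertices are distinct with nonzero dot product *)
definition nabla_connected_on :: "nat list \<Rightarrow> (nat \<Rightarrow> nat) set \<Rightarrow> bool" where
  "nabla_connected_on ns V \<longleftrightarrow>
     (\<forall>x\<in>V. \<forall>y\<in>V. (x, y) \<in> {(a, b). a \<in> V \<and> b \<in> V \<and> a \<noteq> b \<and> dot ns a b \<noteq> 0}\<^sup>*)"

definition Betti :: "nat list \<Rightarrow> nat set \<Rightarrow> nat set" where
  "Betti ns S = {s \<in> S. \<not> nabla_connected_on ns (Z ns s)}"

definition U :: "nat set \<Rightarrow> nat set \<Rightarrow> nat set" where
  "U S X = {x \<in> X. \<forall>a\<in>{y \<in> X. leS S y x}. \<forall>b\<in>{y \<in> X. leS S y x}. leS S a b \<or> leS S b a}"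

definition isolated :: "nat list \<Rightarrow> nat \<Rightarrow> (nat \<Rightarrow> nat) set" where
  "isolated ns t = {z \<in> Z ns t. \<forall>x\<in>Z ns t - {z}. dot ns z x = 0}"

definition isolated_set :: "nat list \<Rightarrow> nat set \<Rightarrow> (nat \<Rightarrow> nat) set" where
  "isolated_set ns L = (\<Union>t\<in>L. isolated ns t)"

definition Is :: "nat list \<Rightarrow> (nat \<Rightarrow> nat) set" where
  "Is ns = {z \<in> vecs ns. \<exists>!x. x \<in> Z ns (phi ns z)}"

definition Bset :: "nat list \<Rightarrow> nat \<Rightarrow> nat set \<Rightarrow> (nat \<Rightarrow> nat) set" where
  "Bset ns s L = {v \<in> Z ns s. \<exists>w\<in>Is ns. \<exists>xs. set xs \<subseteq> isolated_set ns L \<and>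
                      v = (\<lambda>i. w i + (\<Sum>x\<leftarrow>xs. x i))}"

end

theory Submission
  imports Defs
begin

definition vadd :: "(nat \<Rightarrow> nat) \<Rightarrow> (nat \<Rightarrow> nat) \<Rightarrow> nat \<Rightarrow> nat" where
  "vadd a b = (\<lambda>i. a i + b i)"

lemma phi_add: "phi ns (vadd a b) = phi ns a + phi ns b"
  by (simp add: phi_def vadd_def sum.distrib distrib_right)

lemma dot_nz: "dot ns a b \<noteq> 0 \<longleftrightarrow> (\<exists>i<length ns. a i \<noteq> 0 \<and> b i \<noteq> 0)"
  by (auto simp: dot_def)

lemma vadd_vecs: "a \<in> vecs ns \<Longrightarrow> b \<in> vecs ns \<Longrightarrow> vadd a b \<in> vecs ns"
  by (simp add: vecs_def vadd_def)

lemma phi_nz: "phi ns a \<noteq> 0 \<Longrightarrow> \<exists>i<length ns. a i \<noteq> 0"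
  by (auto simp: phi_def)

lemma sum_list_vecs: "set xs \<subseteq> vecs ns \<Longrightarrow> (\<lambda>i. \<Sum>x\<leftarrow>xs. x i) \<in> vecs ns"
  by (induction xs) (auto simp: vecs_def)

lemma Is_iff: "z \<in> vecs ns \<Longrightarrow> z \<in> Is ns \<longleftrightarrow> (\<forall>x\<in>Z ns (phi ns z). x = z)"
  unfolding Is_def Z_def by auto

lemma ind_phi: "j < length ns \<Longrightarrow> phi ns (\<lambda>i. if i = j then 1 else 0) = ns ! j"
proof -
  assume j: "j < length ns"
  have "phi ns (\<lambda>i. if i = j then 1 else 0) = (\<Sum>i<length ns. if i = j then ns ! i else 0)"
    unfolding phi_def by (rule sum.cong) auto
  also have "\<dots> = ns ! j" using j by (simp add: sum.delta)
  finally show ?thesis .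
qed

lemma ind_vecs: "j < length ns \<Longrightarrow> (\<lambda>i. if i = j then 1 else 0) \<in> vecs ns"
  by (auto simp: vecs_def)

lemma mult_in: "numerical_semigroup S \<Longrightarrow> a \<in> S \<Longrightarrow> (k::nat) * a \<in> S"
  by (induction k) (auto simp: numerical_semigroup_def)

lemma phi_in_S:
  assumes "numerical_semigroup S" "set ns \<subseteq> S"
  shows "phi ns z \<in> S"
proof -
  have "\<And>n. n \<le> length ns \<Longrightarrow> (\<Sum>i<n. z i * ns ! i) \<in> S"
  proof -
    fix n show "n \<le> length ns \<Longrightarrow> (\<Sum>i<n. z i * ns ! i) \<in> S"
    proof (induction n)
      case 0 then show ?case using assms(1) by (simp add: numerical_semigroup_def)
    next
      case (Suc n)
      have "ns ! n \<in> S" using Suc.prems assms(2) by auto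
      then have "z n * ns ! n \<in> S" using mult_in assms(1) by blast
      then show ?case using Suc assms(1) by (simp add: numerical_semigroup_def)
    qed
  qed
  then show ?thesis unfolding phi_def by simp
qed

lemma leS_trans: "numerical_semigroup S \<Longrightarrow> leS S a b \<Longrightarrow> leS S b c \<Longrightarrow> leS S a c"
  unfolding leS_def numerical_semigroup_def
proof (elim conjE, intro conjI)
  fix a b c :: nat
  assume "a \<le> b" "b \<le> c" and h: "\<forall>a\<in>S. \<forall>b\<in>S. a + b \<in> S" and "b - a \<in> S" "c - b \<in> S"
  then have "(c - b) + (b - a) \<in> S" by blast
  moreover have "c - a = (c - b) + (b - a)" using \<open>a \<le> b\<close> \<open>b \<le> c\<close> by simp
  ultimately show "c - a \<in> S" by simp
  show "a \<le> c" using \<open>a \<le> b\<close> \<open>b \<le> c\<close> by simp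
qed


definition mmin :: "nat list \<Rightarrow> (nat \<Rightarrow> nat) \<Rightarrow> bool" where
  "mmin ns m \<longleftrightarrow> m \<in> vecs ns \<and> m \<notin> Is ns \<and>
     (\<forall>m'. m' \<in> vecs ns \<longrightarrow> m' \<le> m \<longrightarrow> m' \<noteq> m \<longrightarrow> m' \<in> Is ns)"

lemma vec_sum_less:
  assumes "m \<in> vecs ns" "y \<in> vecs ns" "m \<le> y" "m \<noteq> y"
  shows "(\<Sum>i<length ns. m i) < (\<Sum>i<length ns. y i)"
proof -
  obtain j where j: "m j \<noteq> y j" using assms(4) by auto
  have "j < length ns"
  proof (rule ccontr)
    assume "\<not> j < length ns" then show False using j assms(1,2) unfolding vecs_def by auto
  qed
  moreover have "m j < y j" using j assms(3) by (simp add: le_fun_def order_le_neq_trans)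
  ultimately show ?thesis
    using assms(3) by (intro sum_strict_mono_ex1) (auto simp: le_fun_def)
qed

lemma mmin_exists:
  assumes "y \<in> vecs ns" "y \<notin> Is ns"
  shows "\<exists>m. m \<le> y \<and> mmin ns m"
  using assms
proof (induction "\<Sum>i<length ns. y i" arbitrary: y rule: less_induct)
  case less
  show ?case
  proof (cases "mmin ns y")
    case True then show ?thesis by auto
  next
    case False
    then obtain m' where m': "m' \<in> vecs ns" "m' \<le> y" "m' \<noteq> y" "m' \<notin> Is ns"
      using less.prems unfolding mmin_def by blast
    have "(\<Sum>i<length ns. m' i) < (\<Sum>i<length ns. y i)"
      using vec_sum_less[OF m'(1) less.prems(1) m'(2,3)] .
    then obtain m where "m \<le> m'" "mmin ns m" using less.hyps m'(1,4) by blast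
    then show ?thesis using m'(2) order_trans by blast
  qed
qed

lemma decr_phi:
  assumes "i < length ns" "m i > 0"
  shows "phi ns m = phi ns (m(i := m i - 1)) + ns ! i"
proof -
  have "m = vadd (m(i := m i - 1)) (\<lambda>k. if k = i then 1 else 0)"
    using assms(2) by (auto simp: vadd_def)
  then have "phi ns m = phi ns (vadd (m(i := m i - 1)) (\<lambda>k. if k = i then 1 else 0))" by simp
  also have "\<dots> = phi ns (m(i := m i - 1)) + ns ! i" using phi_add ind_phi assms(1) by simp
  finally show ?thesis .
qed

lemma mmin_isolated:
  assumes "mmin ns m"
  shows "m \<in> isolated ns (phi ns m)"
proof -
  have mv: "m \<in> vecs ns" using assms mmin_def by blast
  have "dot ns m x = 0" if x: "x \<in> Z ns (phi ns m)" "x \<noteq> m" for x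
  proof (rule ccontr)
    assume "dot ns m x \<noteq> 0"
    then obtain i where i: "i < length ns" "m i \<noteq> 0" "x i \<noteq> 0" using dot_nz by blast
    define m' where "m' = m(i := m i - 1)"
    define x' where "x' = x(i := x i - 1)"
    have xv: "x \<in> vecs ns" "phi ns x = phi ns m" using x unfolding Z_def by auto
    have m'v: "m' \<in> vecs ns" using mv i(1) unfolding m'_def vecs_def by auto
    have x'v: "x' \<in> vecs ns" using xv i(1) unfolding x'_def vecs_def by auto
    have "m' \<le> m" unfolding m'_def le_fun_def by auto
    moreover have "m' \<noteq> m"
    proof
      assume "m' = m"
      then have "m' i = m i" by simp
      then show False using i(2) unfolding m'_def by simp
    qed
    ultimately have "m' \<in> Is ns" using assms m'v unfolding mmin_def by blast
    moreover have "phi ns x' = phi ns m'"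
      using decr_phi[OF i(1), of m] decr_phi[OF i(1), of x] i xv(2) unfolding m'_def x'_def by simp
    moreover have "x' \<noteq> m'"
    proof
      assume "x' = m'"
      have "x = m"
      proof (rule ext)
        fix k show "x k = m k" using fun_cong[OF \<open>x' = m'\<close>, of k] i
          by (cases "k = i") (auto simp: x'_def m'_def)
      qed
      then show False using x(2) by simp
    qed
    ultimately show False using x'v m'v unfolding Is_def Z_def by auto
  qed
  then show ?thesis unfolding isolated_def Z_def using mv by auto
qed

lemma isolated_not_conn:
  assumes "m \<in> isolated ns t" "x \<in> Z ns t" "x \<noteq> m"
  shows "\<not> nabla_connected_on ns (Z ns t)"
proof
  assume "nabla_connected_on ns (Z ns t)"
  then have "(m, x) \<in> {(a, b). a \<in> Z ns t \<and> b \<in> Z ns t \<and> a \<noteq> b \<and> dot ns a b \<noteq> 0}\<^sup>*"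
    using assms unfolding nabla_connected_on_def isolated_def by blast
  then show False
  proof (cases rule: converse_rtranclE)
    case base then show ?thesis using assms(3) by simp
  next
    case (step y)
    then have "y \<in> Z ns t" "y \<noteq> m" "dot ns m y \<noteq> 0" by auto
    moreover have "\<forall>x\<in>Z ns t - {m}. dot ns m x = 0" using assms(1) unfolding isolated_def by simp
    ultimately show ?thesis by (simp only: Ball_def Diff_iff singleton_iff) simp
  qed
qed

lemma Betti_two:
  assumes "b \<in> Betti ns S"
  shows "b \<in> S \<and> (\<exists>x y. x \<in> Z ns b \<and> y \<in> Z ns b \<and> x \<noteq> y)"
proof -
  have "\<not> nabla_connected_on ns (Z ns b)" "b \<in> S" using assms unfolding Betti_def by auto
  then obtain x y where "x \<in> Z ns b" "y \<in> Z ns b"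
    "(x, y) \<notin> {(a, b'). a \<in> Z ns b \<and> b' \<in> Z ns b \<and> a \<noteq> b' \<and> dot ns a b' \<noteq> 0}\<^sup>*"
    unfolding nabla_connected_on_def by blast
  moreover then have "x \<noteq> y" by auto
  ultimately show ?thesis using \<open>b \<in> S\<close> by blast
qed

lemma Betti_notIs:
  assumes "b \<in> Betti ns S" "f \<in> Z ns b"
  shows "f \<notin> Is ns"
proof
  assume "f \<in> Is ns"
  have fv: "f \<in> vecs ns" "phi ns f = b" using assms(2) unfolding Z_def by auto
  have h: "\<forall>x\<in>Z ns b. x = f" using Is_iff[OF fv(1)] \<open>f \<in> Is ns\<close> fv(2) by simp
  obtain x y where "x \<in> Z ns b" "y \<in> Z ns b" "x \<noteq> y" using Betti_two[OF assms(1)] by blast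
  have "x = f" using bspec[OF h \<open>x \<in> Z ns b\<close>] .
  moreover have "y = f" using bspec[OF h \<open>y \<in> Z ns b\<close>] .
  ultimately have "x = y" by simp
  with \<open>x \<noteq> y\<close> show False by contradiction
qed

lemma Bset_Is: "w \<in> Is ns \<Longrightarrow> w \<in> Bset ns (phi ns w) L"
  unfolding Bset_def by (rule CollectI, intro conjI bexI[of _ w] exI[of _ "[]"]) (auto simp: Z_def Is_def)

lemma Bset_add:
  assumes "x \<in> isolated_set ns L" "y \<in> Bset ns a L"
  shows "vadd x y \<in> Bset ns (phi ns x + a) L"
proof -
  obtain w xs where w: "w \<in> Is ns" "set xs \<subseteq> isolated_set ns L" "y = (\<lambda>i. w i + (\<Sum>x\<leftarrow>xs. x i))"
    and y: "y \<in> Z ns a" using assms(2) unfolding Bset_def by blast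
  have xv: "x \<in> vecs ns" using assms(1) unfolding isolated_set_def isolated_def Z_def by auto
  have "vadd x y \<in> Z ns (phi ns x + a)" using xv y phi_add[of ns x y] vadd_vecs[of x ns y] unfolding Z_def by auto
  moreover have "vadd x y = (\<lambda>i. w i + (\<Sum>x\<leftarrow>(x # xs). x i))" using w(3) by (auto simp: vadd_def)
  moreover have "set (x # xs) \<subseteq> isolated_set ns L" using w(2) assms(1) by simp
  ultimately show ?thesis using w(1) unfolding Bset_def by blast
qed


definition vsub :: "(nat \<Rightarrow> nat) \<Rightarrow> (nat \<Rightarrow> nat) \<Rightarrow> nat \<Rightarrow> nat" where
  "vsub a b = (\<lambda>i. a i - b i)"

lemma vsub_vecs: "a \<in> vecs ns \<Longrightarrow> vsub a b \<in> vecs ns"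
  by (simp add: vecs_def vsub_def)

lemma vadd_vsub: "m \<le> y \<Longrightarrow> vadd m (vsub y m) = y"
  by (auto simp: vadd_def vsub_def le_fun_def)

lemma phi_vsub: "m \<le> y \<Longrightarrow> phi ns y = phi ns m + phi ns (vsub y m)"
  using phi_add[of ns m "vsub y m"] vadd_vsub[of m y] by simp

lemma zero_vecs: "(\<lambda>_. 0) \<in> vecs ns" by (simp add: vecs_def)

context
  fixes S :: "nat set" and ns :: "nat list"
  assumes NS: "numerical_semigroup S" and MG: "minimal_generators S ns"
begin

lemma ns_S: "set ns \<subseteq> S" using MG unfolding minimal_generators_def by auto

lemma ns_pos: "i < length ns \<Longrightarrow> 0 < ns ! i"
proof -
  assume "i < length ns"
  then have "ns ! i \<in> set ns" by simp
  then show ?thesis using MG unfolding minimal_generators_def by auto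
qed

lemma phiS: "phi ns z \<in> S" using phi_in_S[OF NS ns_S] .

lemma phi_zero: "z \<in> vecs ns \<Longrightarrow> phi ns z = 0 \<Longrightarrow> z = (\<lambda>_. 0)"
proof (rule ext)
  fix i assume zv: "z \<in> vecs ns" and p: "phi ns z = 0"
  show "z i = 0"
  proof (cases "i < length ns")
    case True
    then have "z i * ns ! i = 0" using p unfolding phi_def by simp
    then show ?thesis using ns_pos[OF True] by simp
  next
    case False then show ?thesis using zv unfolding vecs_def by simp
  qed
qed

lemma zero_Is: "(\<lambda>_. 0) \<in> Is ns"
proof -
  have "phi ns (\<lambda>_. 0) = 0" by (simp add: phi_def)
  moreover have "\<forall>x\<in>Z ns 0. x = (\<lambda>_. 0)" using phi_zero unfolding Z_def by auto
  ultimately show ?thesis using Is_iff[OF zero_vecs, of ns] by simp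
qed

lemma fact_exists: "c \<in> S \<Longrightarrow> \<exists>z. z \<in> Z ns c"
proof (induction c rule: less_induct)
  case (less c)
  show ?case
  proof (cases "c = 0")
    case True
    then show ?thesis using zero_vecs[of ns] by (auto simp: Z_def phi_def)
  next
    case c0: False
    show ?thesis
    proof (cases "c \<in> set ns")
      case True
      then obtain j where "j < length ns" "c = ns ! j" by (auto simp: in_set_conv_nth)
      then show ?thesis using ind_phi ind_vecs unfolding Z_def by blast
    next
      case False
      then obtain a b where ab: "a \<in> S" "b \<in> S" "a \<noteq> 0" "b \<noteq> 0" "c = a + b"
        using less.prems c0 MG unfolding minimal_generators_def by blast
      have "a < c" "b < c" using ab by simp_all
      then obtain za zb where "za \<in> Z ns a" "zb \<in> Z ns b" using less.IH ab(1,2) by blast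
      then have "vadd za zb \<in> Z ns c" using ab(5) phi_add[of ns za zb] vadd_vecs[of za ns zb] unfolding Z_def by auto
      then show ?thesis by blast
    qed
  qed
qed

lemma mmin_Betti: "mmin ns m \<Longrightarrow> phi ns m \<in> Betti ns S"
proof -
  assume mm: "mmin ns m"
  then have mv: "m \<in> vecs ns" "m \<notin> Is ns" unfolding mmin_def by auto
  then obtain x where "x \<in> Z ns (phi ns m)" "x \<noteq> m" using Is_iff[OF mv(1)] by blast
  then have "\<not> nabla_connected_on ns (Z ns (phi ns m))"
    using isolated_not_conn mmin_isolated[OF mm] by blast
  then show ?thesis unfolding Betti_def using phiS by simp
qed

lemma leS_phi: "m \<le> y \<Longrightarrow> leS S (phi ns m) (phi ns y)"
  using phi_vsub[of m y ns] phiS[of "vsub y m"] unfolding leS_def by simp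

lemma mmin_nz: "mmin ns m \<Longrightarrow> m \<noteq> (\<lambda>_. 0)"
  using zero_Is unfolding mmin_def by auto

lemma D_R:
  assumes "y \<in> vecs ns" "\<forall>m. m \<le> y \<longrightarrow> mmin ns m \<longrightarrow> phi ns m \<in> L"
  shows "y \<in> Bset ns (phi ns y) L"
  using assms
proof (induction "\<Sum>i<length ns. y i" arbitrary: y rule: less_induct)
  case less
  show ?case
  proof (cases "y \<in> Is ns")
    case True then show ?thesis by (rule Bset_Is)
  next
    case False
    then obtain m where m: "m \<le> y" "mmin ns m" using mmin_exists less.prems(1) by blast
    have mv: "m \<in> vecs ns" using m(2) unfolding mmin_def by simp
    have "phi ns m \<in> L" using less.prems(2) m by blast
    then have mI: "m \<in> isolated_set ns L" using mmin_isolated[OF m(2)] unfolding isolated_set_def by blast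
    define y' where "y' = vsub y m"
    have y'v: "y' \<in> vecs ns" unfolding y'_def using vsub_vecs less.prems(1) by blast
    have "y' \<le> y" unfolding y'_def vsub_def le_fun_def by simp
    moreover have "y' \<noteq> y"
    proof
      assume "y' = y"
      then have "m = (\<lambda>_. 0)" using m(1) unfolding y'_def vsub_def le_fun_def
        by (metis (no_types, lifting) add_diff_inverse_nat diff_add_zero diff_diff_cancel le_add_diff_inverse less_imp_le_nat)
      then show False using mmin_nz m(2) by simp
    qed
    ultimately have lt: "(\<Sum>i<length ns. y' i) < (\<Sum>i<length ns. y i)"
      using vec_sum_less y'v less.prems(1) by blast
    have "\<forall>m. m \<le> y' \<longrightarrow> mmin ns m \<longrightarrow> phi ns m \<in> L"
      using less.prems(2) \<open>y' \<le> y\<close> order_trans by blast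
    then have "y' \<in> Bset ns (phi ns y') L" using less.hyps lt y'v by blast
    then have "vadd m y' \<in> Bset ns (phi ns m + phi ns y') L" using Bset_add mI by blast
    moreover have "vadd m y' = y" unfolding y'_def using vadd_vsub m(1) by simp
    moreover have "phi ns m + phi ns y' = phi ns y" unfolding y'_def using phi_vsub m(1) by simp
    ultimately show ?thesis by simp
  qed
qed

end


definition CC :: "nat set \<Rightarrow> nat list \<Rightarrow> nat \<Rightarrow> nat set \<Rightarrow> nat \<Rightarrow> bool" where
  "CC S ns u L a \<longleftrightarrow> (\<forall>b \<in> Betti ns S - L. leS S b a \<longrightarrow> leS S u b)"

context
  fixes S :: "nat set" and ns :: "nat list" and u :: nat and L :: "nat set"
  assumes NS: "numerical_semigroup S" and MG: "minimal_generators S ns"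
    and UU: "u \<in> U S (Betti ns S)" and LL: "L = {b \<in> Betti ns S. leS S b u}"
begin

lemma L_Betti: "t \<in> L \<Longrightarrow> t \<in> Betti ns S \<and> leS S t u" using LL by simp

lemma L_chain: "t \<in> L \<Longrightarrow> t' \<in> L \<Longrightarrow> leS S t t' \<or> leS S t' t"
  using UU LL unfolding U_def by auto

lemma CC_mono: "CC S ns u L a \<Longrightarrow> leS S a' a \<Longrightarrow> CC S ns u L a'"
  unfolding CC_def using leS_trans[OF NS] by blast

lemma NE: "a \<in> S \<Longrightarrow> CC S ns u L a \<Longrightarrow> \<exists>y. y \<in> Bset ns a L"
proof (induction a rule: less_induct)
  case (less a)
  obtain y where y: "y \<in> Z ns a" using fact_exists[OF NS MG less.prems(1)] by blast
  have yv: "y \<in> vecs ns" "phi ns y = a" using y unfolding Z_def by auto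
  show ?case
  proof (cases "y \<in> Is ns")
    case True
    then show ?thesis using Bset_Is[of y ns L] yv(2) by auto
  next
    case False
    have "\<exists>m. mmin ns m \<and> phi ns m \<in> L \<and> leS S (phi ns m) a"
    proof (cases "leS S u a")
      case True
      have uB: "u \<in> Betti ns S" using UU unfolding U_def by simp
      then obtain f where f: "f \<in> Z ns u" using Betti_two[OF uB] by blast
      have fv: "f \<in> vecs ns" "phi ns f = u" using f unfolding Z_def by auto
      have "f \<notin> Is ns" using Betti_notIs[OF uB f] .
      then obtain m where m: "m \<le> f" "mmin ns m" using mmin_exists fv(1) by blast
      have "leS S (phi ns m) u" using leS_phi[OF NS MG m(1)] fv(2) by simp
      moreover have "phi ns m \<in> Betti ns S" using mmin_Betti[OF NS MG m(2)] .
      ultimately have "phi ns m \<in> L" using LL by simp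
      moreover have "leS S (phi ns m) a" using leS_trans[OF NS \<open>leS S (phi ns m) u\<close> True] .
      ultimately show ?thesis using m(2) by blast
    next
      case nu: False
      obtain m where m: "m \<le> y" "mmin ns m" using mmin_exists yv(1) False by blast
      have le: "leS S (phi ns m) a" using leS_phi[OF NS MG m(1)] yv(2) by simp
      have B: "phi ns m \<in> Betti ns S" using mmin_Betti[OF NS MG m(2)] .
      have "phi ns m \<in> L"
      proof (rule ccontr)
        assume "phi ns m \<notin> L"
        then have "leS S u (phi ns m)" using less.prems(2) B le unfolding CC_def by blast
        then have "leS S u a" using leS_trans[OF NS _ le] by blast
        then show False using nu by simp
      qed
      then show ?thesis using m(2) le by blast
    qed
    then obtain m where m: "mmin ns m" "phi ns m \<in> L" "leS S (phi ns m) a" by blast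
    have mv: "m \<in> vecs ns" using m(1) unfolding mmin_def by simp
    have "phi ns m \<noteq> 0" using phi_zero[OF NS MG mv] mmin_nz[OF NS MG m(1)] by blast
    define a' where "a' = a - phi ns m"
    have a'lt: "a' < a" unfolding a'_def using m(3) \<open>phi ns m \<noteq> 0\<close> unfolding leS_def by simp
    have a'S: "a' \<in> S" using m(3) unfolding a'_def leS_def by simp
    have "leS S a' a" unfolding leS_def a'_def using m(3) phiS[OF NS MG, of m] unfolding leS_def by simp
    then have "CC S ns u L a'" using CC_mono less.prems(2) by blast
    then obtain p where p: "p \<in> Bset ns a' L" using less.IH a'lt a'S by blast
    have mI: "m \<in> isolated_set ns L" using mmin_isolated[OF m(1)] m(2) unfolding isolated_set_def by blast
    have "vadd m p \<in> Bset ns (phi ns m + a') L" using Bset_add[OF mI p] .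
    moreover have "phi ns m + a' = a" unfolding a'_def using m(3) unfolding leS_def by simp
    ultimately show ?thesis by auto
  qed
qed


lemma decomp:
  assumes "z \<in> Bset ns s L" "z \<notin> Is ns"
  shows "\<exists>x r t. x \<in> isolated ns t \<and> t \<in> L \<and> z = vadd x r \<and> r \<in> vecs ns"
proof -
  obtain w xs where w: "w \<in> Is ns" "set xs \<subseteq> isolated_set ns L" "z = (\<lambda>i. w i + (\<Sum>x\<leftarrow>xs. x i))"
    using assms(1) unfolding Bset_def by blast
  show ?thesis
  proof (cases xs)
    case Nil
    then have "z = w" using w(3) by simp
    then show ?thesis using assms(2) w(1) by simp
  next
    case (Cons x xs')
    then obtain t where t: "t \<in> L" "x \<in> isolated ns t" using w(2) unfolding isolated_set_def by auto
    have "set xs' \<subseteq> vecs ns" using w(2) Cons unfolding isolated_set_def isolated_def Z_def by auto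
    then have "(\<lambda>i. w i + (\<Sum>x\<leftarrow>xs'. x i)) \<in> vecs ns"
      using vadd_vecs[of w ns "\<lambda>i. \<Sum>x\<leftarrow>xs'. x i"] sum_list_vecs w(1) unfolding Is_def vadd_def by blast
    moreover have "z = vadd x (\<lambda>i. w i + (\<Sum>x\<leftarrow>xs'. x i))" using w(3) Cons by (auto simp: vadd_def)
    ultimately show ?thesis using t by blast
  qed
qed

lemma bridge:
  assumes "z \<in> V" "z' \<in> V" "v \<in> V" "dot ns z z' = 0"
    and "i < length ns" "z i \<noteq> 0" "v i \<noteq> 0"
    and "j < length ns" "z' j \<noteq> 0" "v j \<noteq> 0"
  shows "(z, z') \<in> {(a, b). a \<in> V \<and> b \<in> V \<and> a \<noteq> b \<and> dot ns a b \<noteq> 0}\<^sup>*"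
proof -
  have "v \<noteq> z" using assms(4,8,9,10) dot_nz[of ns z z'] by auto
  moreover have "v \<noteq> z'" using assms(4,5,6,7) dot_nz[of ns z z'] by auto
  moreover have "dot ns z v \<noteq> 0" using assms(5,6,7) dot_nz by blast
  moreover have "dot ns v z' \<noteq> 0" using assms(8,9,10) dot_nz by blast
  ultimately show ?thesis using assms(1,2,3)
    by (intro rtrancl_into_rtrancl[OF r_into_rtrancl]) auto
qed

lemma case2:
  assumes s: "s \<in> S" "CC S ns u L s"
    and x: "x \<in> isolated ns t" "t \<in> L" and x': "x' \<in> isolated ns t'" "t' \<in> L"
    and r': "r' \<in> vecs ns" "phi ns x' + phi ns r' = s" and st: "phi ns x + phi ns r = s"
    and le: "leS S t t'" and nle: "\<not> leS S (t + t') s"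
  shows "\<exists>v \<in> Bset ns s L. x \<le> v \<and> r' \<le> v"
proof -
  have xZ: "x \<in> vecs ns" "phi ns x = t" using x(1) unfolding isolated_def Z_def by auto
  have x'Z: "phi ns x' = t'" using x'(1) unfolding isolated_def Z_def by auto
  obtain q where q: "q \<in> Z ns (t' - t)" using fact_exists[OF NS MG] le unfolding leS_def by blast
  have qv: "q \<in> vecs ns" "phi ns q = t' - t" using q unfolding Z_def by auto
  define y where "y = vadd q r'"
  have yv: "y \<in> vecs ns" unfolding y_def using vadd_vecs qv(1) r'(1) by blast
  have phiy: "phi ns y = s - t" unfolding y_def phi_add using qv(2) r'(2) x'Z le st xZ(2) unfolding leS_def by simp
  have "\<forall>m. m \<le> y \<longrightarrow> mmin ns m \<longrightarrow> phi ns m \<in> L"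
  proof (intro allI impI)
    fix m assume m: "m \<le> y" "mmin ns m"
    have B: "phi ns m \<in> Betti ns S" using mmin_Betti[OF NS MG m(2)] .
    have l1: "leS S (phi ns m) (s - t)" using leS_phi[OF NS MG m(1)] phiy by simp
    have "leS S (s - t) s" unfolding leS_def using st xZ(2) phiS[OF NS MG, of x] by simp
    then have l2: "leS S (phi ns m) s" using leS_trans[OF NS l1] by blast
    show "phi ns m \<in> L"
    proof (rule ccontr)
      assume "phi ns m \<notin> L"
      then have "leS S u (phi ns m)" using s(2) B l2 unfolding CC_def by blast
      then have "leS S t' (phi ns m)" using leS_trans[OF NS] L_Betti[OF x'(2)] by blast
      then have "leS S t' (s - t)" using leS_trans[OF NS _ l1] by blast
      then have "leS S (t + t') s" using st xZ(2) unfolding leS_def by auto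
      then show False using nle by simp
    qed
  qed
  then have yB: "y \<in> Bset ns (phi ns y) L" using D_R[OF NS MG yv] by blast
  have xI: "x \<in> isolated_set ns L" using x unfolding isolated_set_def by blast
  have "vadd x y \<in> Bset ns (phi ns x + phi ns y) L" using Bset_add[OF xI yB] .
  moreover have "phi ns x + phi ns y = s" using phiy xZ(2) st by simp
  moreover have "x \<le> vadd x y" "r' \<le> vadd x y" unfolding le_fun_def vadd_def y_def by auto
  ultimately show ?thesis by auto
qed

end


theorem lemma5p8:
  fixes S :: "nat set" and ns :: "nat list" and u s :: nat and L :: "nat set"
  assumes "numerical_semigroup S"
    and "minimal_generators S ns"
    and "u \<in> U S (Betti ns S)"
    and "L = {b \<in> Betti ns S. leS S b u}"
    and "s \<in> S" and "s \<notin> L"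
    and "\<forall>b \<in> Betti ns S - L. leS S b s \<longrightarrow> leS S u b"
  shows "nabla_connected_on ns (Bset ns s L)"
proof -
  note NS = assms(1) and MG = assms(2) and UU = assms(3) and LL = assms(4)
  have CCs: "CC S ns u L s" using assms(7) unfolding CC_def by blast
  show ?thesis unfolding nabla_connected_on_def
  proof (intro ballI)
    fix z z' assume z: "z \<in> Bset ns s L" and z': "z' \<in> Bset ns s L"
    have zZ: "z \<in> vecs ns" "phi ns z = s" using z unfolding Bset_def Z_def by auto
    have z'Z: "z' \<in> vecs ns" "phi ns z' = s" using z' unfolding Bset_def Z_def by auto
    show "(z, z') \<in> {(a, b). a \<in> Bset ns s L \<and> b \<in> Bset ns s L \<and> a \<noteq> b \<and> dot ns a b \<noteq> 0}\<^sup>*"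
    proof (cases "z = z'")
      case True then show ?thesis by simp
    next
      case neq: False
      show ?thesis
      proof (cases "dot ns z z' = 0")
        case False
        then show ?thesis using z z' neq by (intro r_into_rtrancl) auto
      next
        case d0: True
        have zI: "z \<notin> Is ns"
        proof
          assume "z \<in> Is ns"
          then have h: "\<forall>x\<in>Z ns s. x = z" using Is_iff[OF zZ(1)] zZ(2) by simp
          have "z' \<in> Z ns s" using z'Z unfolding Z_def by simp
          then have "z' = z" using bspec[OF h] by blast
          then show False using neq by simp
        qed
        have z'I: "z' \<notin> Is ns"
        proof
          assume "z' \<in> Is ns"
          then have h: "\<forall>x\<in>Z ns s. x = z'" using Is_iff[OF z'Z(1)] z'Z(2) by simp
          have "z \<in> Z ns s" using zZ unfolding Z_def by simp
          then have "z = z'" using bspec[OF h] by blast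
          then show False using neq by simp
        qed
        obtain x r t where xr: "x \<in> isolated ns t" "t \<in> L" "z = vadd x r" "r \<in> vecs ns"
          using decomp[OF NS MG UU LL z zI] by blast
        obtain x' r' t' where xr': "x' \<in> isolated ns t'" "t' \<in> L" "z' = vadd x' r'" "r' \<in> vecs ns"
          using decomp[OF NS MG UU LL z' z'I] by blast
        have xZ: "x \<in> Z ns t" "x \<in> vecs ns" "phi ns x = t" using xr(1) unfolding isolated_def Z_def by auto
        have x'Z: "x' \<in> Z ns t'" "x' \<in> vecs ns" "phi ns x' = t'" using xr'(1) unfolding isolated_def Z_def by auto
        have st: "phi ns x + phi ns r = s" using zZ(2) xr(3) phi_add by metis
        have st': "phi ns x' + phi ns r' = s" using z'Z(2) xr'(3) phi_add by metis
        have tB: "t \<in> Betti ns S" "t' \<in> Betti ns S" using xr(2) xr'(2) LL by auto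
        have tS: "t \<in> S" "t' \<in> S" using tB unfolding Betti_def by auto
        have "phi ns x \<noteq> 0"
        proof
          assume "phi ns x = 0"
          then have "x = (\<lambda>_. 0)" using phi_zero[OF NS MG xZ(2)] by blast
          then show False using zero_Is[OF NS MG] Betti_notIs[OF tB(1) xZ(1)] by simp
        qed
        then obtain i where i: "i < length ns" "x i \<noteq> 0" using phi_nz by blast
        have "phi ns x' \<noteq> 0"
        proof
          assume "phi ns x' = 0"
          then have "x' = (\<lambda>_. 0)" using phi_zero[OF NS MG x'Z(2)] by blast
          then show False using zero_Is[OF NS MG] Betti_notIs[OF tB(2) x'Z(1)] by simp
        qed
        then obtain j' where j': "j' < length ns" "x' j' \<noteq> 0" using phi_nz by blast
        have "phi ns r' \<noteq> 0"
        proof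
          assume "phi ns r' = 0" then have "s = t'" using st' x'Z(3) by simp
          then show False using xr'(2) assms(6) by simp
        qed
        then obtain j where j: "j < length ns" "r' j \<noteq> 0" using phi_nz by blast
        have "phi ns r \<noteq> 0"
        proof
          assume "phi ns r = 0" then have "s = t" using st xZ(3) by simp
          then show False using xr(2) assms(6) by simp
        qed
        then obtain i' where i': "i' < length ns" "r i' \<noteq> 0" using phi_nz by blast
        have zi: "z i \<noteq> 0" "z i' \<noteq> 0" using i i' xr(3) by (auto simp: vadd_def)
        have zj: "z' j' \<noteq> 0" "z' j \<noteq> 0" using j j' xr'(3) by (auto simp: vadd_def)
        have xI: "x \<in> isolated_set ns L" using xr unfolding isolated_set_def by blast
        have x'I: "x' \<in> isolated_set ns L" using xr' unfolding isolated_set_def by blast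
        show ?thesis
        proof (cases "leS S (t + t') s")
          case True
          define a where "a = s - (t + t')"
          have aS: "a \<in> S" using True unfolding leS_def a_def by simp
          have "t + t' \<in> S" using tS NS unfolding numerical_semigroup_def by blast
          then have "leS S a s" using True unfolding leS_def a_def by auto
          then have "CC S ns u L a" using CC_mono[OF NS MG UU LL CCs] by blast
          then obtain p where p: "p \<in> Bset ns a L" using NE[OF NS MG UU LL aS] by blast
          have "vadd x (vadd x' p) \<in> Bset ns (phi ns x + (phi ns x' + a)) L"
            using Bset_add[OF xI Bset_add[OF x'I p]] .
          moreover have "phi ns x + (phi ns x' + a) = s"
            using xZ(3) x'Z(3) True unfolding a_def leS_def by simp
          ultimately have vB: "vadd x (vadd x' p) \<in> Bset ns s L" by simp
          show ?thesis
            by (rule bridge[OF NS MG UU LL z z' vB d0 i(1) zi(1) _ j'(1) zj(1)]) (use i j' in \<open>auto simp: vadd_def\<close>)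
        next
          case nle: False
          from L_chain[OF NS MG UU LL xr(2) xr'(2)] show ?thesis
          proof
            assume le: "leS S t t'"
            obtain v where v: "v \<in> Bset ns s L" "x \<le> v" "r' \<le> v"
              using case2[OF NS MG UU LL assms(5) CCs xr(1,2) xr'(1,2) xr'(4) st' st le nle] by blast
            have "v i \<noteq> 0" "v j \<noteq> 0" using v(2,3) i j unfolding le_fun_def by (metis le_zero_eq)+
            then show ?thesis using bridge[OF NS MG UU LL z z' v(1) d0 i(1) zi(1) _ j(1) zj(2)] by blast
          next
            assume le: "leS S t' t"
            have nle': "\<not> leS S (t' + t) s" using nle by (simp add: add.commute)
            obtain v where v: "v \<in> Bset ns s L" "x' \<le> v" "r \<le> v"
              using case2[OF NS MG UU LL assms(5) CCs xr'(1,2) xr(1,2) xr(4) st st' le nle'] by blast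
            have "v i' \<noteq> 0" "v j' \<noteq> 0" using v(2,3) i' j' unfolding le_fun_def by (metis le_zero_eq)+
            then show ?thesis using bridge[OF NS MG UU LL z z' v(1) d0 i'(1) zi(2) _ j'(1) zj(1)] by blast
          qed
        qed
      qed
    qed
  qed
qed

end
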